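(* Let $(\tau,T)$ be a dynamic pricing process with $P(\tau<\infty)=1$. Then $(\tau,T)$ is DIR compatible if and only if \[\lambda\int_0^\infty w_-\big(P(T(\tau)-s>y\mid T(\tau)>s)\big)dy\le\theta\quad\text{for all } s \text{ with } P(T(\tau)>s)>0.\]
   Context: Standing assumptions: $\theta>0$, $\lambda>0$; $w_+,w_-:[0,1]\to[0,1]$ strictly increasing, thrice differentiable, $w_\pm(0)=0$, $w_\pm(1)=1$, $w_\pm'(0)>1$, $w_\pm'(1)>1$, $w_\pm'''>0$. A cumulative payment function is $T:\mathbb{R}^+\to\mathbb{R}^+$ of the form $T(t)=\int_0^tf(s)ds+\sum_i1_{t_i<t}T_i$, with $f\ge0$ integrable and $(t_i),(T_i)$ countable sequences of nonnegative numbers, $t_i$ increasing. A stopping time is a random variable $\tau\in[0,\infty]$ whose CDF is the sum of a nondecreasing nonnegative absolutely continuous function and a nondecreasing nonnegative jump function. A dynamic pricing process is a pair $(\tau,T)$; it is DIR compatible if for every $s$ with $P(\tau>s)>0$, \[\theta\,w_+(P(\tau<\infty\mid\tau>s))-\lambda\int_0^\infty w_-\big(P(T(\tau)-T(s)>y\mid\tau>s)\big)dy\ge0.\] *)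

theory Defs
  imports "HOL-Probability.Probability"
begin

definition prob_weight :: "(real \<Rightarrow> real) \<Rightarrow> bool" where
  "prob_weight w \<longleftrightarrow>
     strict_mono_on {0..1} w \<and> w ` {0..1} \<subseteq> {0..1} \<and> w 0 = 0 \<and> w 1 = 1 \<and>
     (\<exists>w1 w2 w3.
        (\<forall>x\<in>{0..1}. (w has_real_derivative w1 x) (at x within {0..1}) \<and>
                     (w1 has_real_derivative w2 x) (at x within {0..1}) \<and>
                     (w2 has_real_derivative w3 x) (at x within {0..1}) \<and>
                     w3 x > 0) \<and>
        w1 0 > 1 \<and> w1 1 > 1)"

definition cumulative_payment :: "(real \<Rightarrow> real) \<Rightarrow> bool" where
  "cumulative_payment T \<longleftrightarrow>
     (\<exists>f tt TT. (\<forall>s\<ge>0. f s \<ge> 0) \<and> set_integrable lborel {0..} f \<and>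
        (\<forall>i. tt i \<ge> 0 \<and> TT i \<ge> 0) \<and> mono tt \<and>
        (\<forall>t\<ge>0. (\<lambda>i. if tt i < t then TT i else 0) sums (T t - (LINT s:{0..t}|lborel. f s))))"

definition pricing_stopping_time :: "'a measure \<Rightarrow> ('a \<Rightarrow> ennreal) \<Rightarrow> bool" where
  "pricing_stopping_time M \<tau> \<longleftrightarrow>
     \<tau> \<in> borel_measurable M \<and>
     (\<exists>g s j. (\<forall>x\<ge>0. g x \<ge> 0) \<and> (\<forall>t\<ge>0. set_integrable lborel {0..t} g) \<and>
        (\<forall>i. s i \<ge> 0 \<and> j i \<ge> 0) \<and>
        (\<forall>t\<ge>0. (\<lambda>i. if s i \<le> t then j i else (0::real)) sums
              (measure M {x\<in>space M. \<tau> x \<le> ennreal t} - (LINT x:{0..t}|lborel. g x))))"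

definition payment_at :: "(real \<Rightarrow> real) \<Rightarrow> ennreal \<Rightarrow> ereal" where
  "payment_at T t = (if t = \<infinity> then (SUP r\<in>{0..}. ereal (T r)) else ereal (T (enn2real t)))"

definition cond_prob :: "'a measure \<Rightarrow> 'a set \<Rightarrow> 'a set \<Rightarrow> real" where
  "cond_prob M A B = measure M (A \<inter> B) / measure M B"

definition DIR_compatible ::
  "'a measure \<Rightarrow> real \<Rightarrow> real \<Rightarrow> (real \<Rightarrow> real) \<Rightarrow> (real \<Rightarrow> real) \<Rightarrow> ('a \<Rightarrow> ennreal) \<Rightarrow> (real \<Rightarrow> real) \<Rightarrow> bool" where
  "DIR_compatible M \<theta> lam wp wm \<tau> T \<longleftrightarrow>
     (\<forall>s\<ge>0. measure M {x\<in>space M. \<tau> x > ennreal s} > 0 \<longrightarrow>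
        ennreal lam * (\<integral>\<^sup>+ y\<in>{0..}. ennreal (wm (cond_prob M
              {x\<in>space M. payment_at T (\<tau> x) - ereal (T s) > ereal y}
              {x\<in>space M. \<tau> x > ennreal s})) \<partial>lborel)
        \<le> ennreal (\<theta> * wp (cond_prob M {x\<in>space M. \<tau> x < \<infinity>} {x\<in>space M. \<tau> x > ennreal s})))"

end

theory Submission imports Defs begin

lemma cp_unfold:
  assumes "cumulative_payment T"
  obtains f tt TT where "\<forall>s\<ge>0. f s \<ge> 0" "\<And>t. f integrable_on {0..t}"
    "\<forall>i. tt i \<ge> 0 \<and> TT i \<ge> 0"
    "\<And>t. t \<ge> 0 \<Longrightarrow> (\<lambda>i. if tt i < t then TT i else 0) sums (T t - integral {0..t} f)"
proof -
  obtain f tt TT where f: "\<forall>s\<ge>0. f s \<ge> 0" "set_integrable lborel {0..} f"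
    and tt: "\<forall>i. tt i \<ge> 0 \<and> TT i \<ge> 0" "mono tt"
    and S: "\<forall>t\<ge>0. (\<lambda>i. if tt i < t then TT i else 0) sums (T t - (LINT s:{0..t}|lborel. f s))"
    using assms unfolding cumulative_payment_def by blast
  have si: "set_integrable lborel {0..t} f" for t
    by (rule set_integrable_subset[OF f(2)]) auto
  show ?thesis
  proof
    show "f integrable_on {0..t}" for t using set_borel_integral_eq_integral(1)[OF si] .
    show "(\<lambda>i. if tt i < t then TT i else 0) sums (T t - integral {0..t} f)" if "t \<ge> 0" for t
      using S that set_borel_integral_eq_integral(2)[OF si] by auto
  qed (use f tt in auto)
qed

lemma cp_T0:
  assumes "cumulative_payment T" shows "T 0 = 0"
proof -
  obtain f tt TT where f: "\<forall>s\<ge>0. f s \<ge> 0" "\<And>t. f integrable_on {0..t}"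
    and tt: "\<forall>i. tt i \<ge> 0 \<and> TT i \<ge> 0"
    and S: "\<And>t. t \<ge> 0 \<Longrightarrow> (\<lambda>i. if tt i < t then TT i else 0) sums (T t - integral {0..t} f)"
    using cp_unfold[OF assms] by blast
  have S0: "(\<lambda>i. if tt i < 0 then TT i else 0) sums (T 0 - integral {0..0} f)" using S[of 0] by simp
  have eq: "(\<lambda>i. if tt i < 0 then TT i else (0::real)) = (\<lambda>i. 0)"
  proof
    fix i have "0 \<le> tt i" using tt by blast
    then show "(if tt i < 0 then TT i else (0::real)) = 0" by simp
  qed
  have "T 0 - integral {0..0} f = 0" using sums_unique2[OF S0[unfolded eq] sums_zero] .
  then show ?thesis by simp
qed

lemma cp_mono:
  assumes "cumulative_payment T" "0 \<le> a" "a \<le> b" shows "T a \<le> T b"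
proof -
  obtain f tt TT where f: "\<forall>s\<ge>0. f s \<ge> 0" "\<And>t. f integrable_on {0..t}"
    and tt: "\<forall>i. tt i \<ge> 0 \<and> TT i \<ge> 0"
    and S: "\<And>t. t \<ge> 0 \<Longrightarrow> (\<lambda>i. if tt i < t then TT i else 0) sums (T t - integral {0..t} f)"
    using cp_unfold[OF assms(1)] by blast
  have Sa: "(\<lambda>i. if tt i < a then TT i else 0) sums (T a - integral {0..a} f)" using S assms by simp
  have Sb: "(\<lambda>i. if tt i < b then TT i else 0) sums (T b - integral {0..b} f)" using S assms by simp
  have le: "\<And>i. (if tt i < a then TT i else 0) \<le> (if tt i < b then TT i else 0)"
    using assms(3) tt by auto
  have "T a - integral {0..a} f \<le> T b - integral {0..b} f"
    by (rule sums_le[OF le Sa Sb])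
  moreover have "integral {0..b} f = integral {0..a} f + integral {a..b} f"
    using Henstock_Kurzweil_Integration.integral_combine[OF assms(2,3) f(2)] by simp
  moreover have "integral {a..b} f \<ge> 0"
  proof (rule integral_nonneg)
    show "f integrable_on {a..b}" using integrable_subinterval_real[OF f(2)[of b], of a b] assms by simp
    show "\<And>x. x \<in> {a..b} \<Longrightarrow> 0 \<le> f x" using f(1) assms by simp
  qed
  ultimately show ?thesis by linarith
qed

lemma cp_nonneg:
  assumes "cumulative_payment T" "0 \<le> a" shows "T a \<ge> 0"
  using cp_mono[OF assms(1) order_refl assms(2)] cp_T0[OF assms(1)] by simp

lemma cont_at_right_end:
  fixes F :: "real \<Rightarrow> real"
  assumes c: "continuous_on {0..t} F" and t: "0 < t" and d: "d > 0"
  shows "\<exists>e>0. \<forall>x\<in>{0..t}. dist x t < e \<longrightarrow> dist (F x) (F t) < d/2"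
proof -
  have tin: "t \<in> {0..t}" using t by simp
  have d2: "d/2 > 0" using d by simp
  show ?thesis
    using continuous_on_iff[THEN iffD1, rule_format, OF c tin d2] .
qed

lemma cp_leftcont:
  assumes "cumulative_payment T" "0 < t" "\<And>u. 0 \<le> u \<Longrightarrow> u < t \<Longrightarrow> T u \<le> a"
  shows "T t \<le> a"
proof (rule ccontr)
  assume "\<not> T t \<le> a"
  define d where "d = T t - a"
  have d: "d > 0" using \<open>\<not> T t \<le> a\<close> d_def by simp
  obtain f tt TT where f: "\<forall>s\<ge>0. f s \<ge> 0" "\<And>t. f integrable_on {0..t}"
    and tt: "\<forall>i. tt i \<ge> 0 \<and> TT i \<ge> 0"
    and S: "\<And>t. t \<ge> 0 \<Longrightarrow> (\<lambda>i. if tt i < t then TT i else 0) sums (T t - integral {0..t} f)"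
    using cp_unfold[OF assms(1)] by blast
  define g where "g = (\<lambda>u i. if tt i < u then TT i else (0::real))"
  have St: "(\<lambda>n. \<Sum>i<n. g t i) \<longlonglongrightarrow> T t - integral {0..t} f"
    using S[of t] assms(2) unfolding sums_def g_def by simp
  have "\<forall>\<^sub>F n in sequentially. (\<Sum>i<n. g t i) > T t - integral {0..t} f - d/2"
    using order_tendstoD(1)[OF St] d by simp
  then obtain N where N: "(\<Sum>i<N. g t i) > T t - integral {0..t} f - d/2"
    unfolding eventually_sequentially by blast
  have "continuous_on {0..t} (\<lambda>x. integral {0..x} f)"
    by (rule indefinite_integral_continuous_1[OF f(2)])
  then have "\<exists>e>0. \<forall>x\<in>{0..t}. dist x t < e \<longrightarrow> dist (integral {0..x} f) (integral {0..t} f) < d/2"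
    by (rule cont_at_right_end[OF _ assms(2) d])
  then obtain e where e: "e > 0" "\<forall>x\<in>{0..t}. dist x t < e \<longrightarrow> dist (integral {0..x} f) (integral {0..t} f) < d/2"
    by blast
  define m where "m = Max (insert 0 (tt ` {i. i < N \<and> tt i < t}))"
  have fin: "finite (insert 0 (tt ` {i. i < N \<and> tt i < t}))" by simp
  have m_lt: "m < t"
    unfolding m_def using fin assms(2) by (subst Max_less_iff) auto
  have m_ge: "tt i \<le> m" if "i < N" "tt i < t" for i
    unfolding m_def using fin that by (intro Max_ge) auto
  have m0: "m \<ge> 0" unfolding m_def using fin by (intro Max_ge) auto
  define u where "u = (max m (t - e/2) + t) / 2"
  have u: "0 \<le> u" "u < t" "t - e/2 < u" "m < u" using m_lt m0 e(1) assms(2) unfolding u_def by auto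
  have "dist (integral {0..u} f) (integral {0..t} f) < d/2"
    using e(2) u by (auto simp: dist_real_def)
  then have Iu: "integral {0..u} f > integral {0..t} f - d/2" unfolding dist_real_def by linarith
  have geq: "g u i = g t i" if "i < N" for i
    using m_ge[OF that] u by (auto simp: g_def)
  have Su: "g u sums (T u - integral {0..u} f)" using S[OF u(1)] unfolding g_def .
  have "(\<Sum>i<N. g u i) \<le> T u - integral {0..u} f"
    using sum_le_suminf[OF sums_summable[OF Su], of "{..<N}"] sums_unique[OF Su] tt
    by (auto simp: g_def)
  moreover have "(\<Sum>i<N. g u i) = (\<Sum>i<N. g t i)" using geq by simp
  ultimately have "T u > a" using N Iu d_def by linarith
  with assms(3)[OF u(1,2)] show False by simp
qed


lemma pay_meas:
  assumes cp: "cumulative_payment T" and tm: "\<tau> \<in> borel_measurable M"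
  shows "(\<lambda>x. payment_at T (\<tau> x)) \<in> borel_measurable M"
proof -
  define T' where "T' = (\<lambda>r. T (max r 0))"
  have "mono T'" unfolding T'_def by (rule monoI) (rule cp_mono[OF cp], auto)
  then have [measurable]: "T' \<in> borel_measurable borel" by (rule borel_measurable_mono)
  have [measurable]: "\<tau> \<in> borel_measurable M" by (rule tm)
  have eq: "(\<lambda>x. payment_at T (\<tau> x)) = (\<lambda>x. if \<tau> x = \<infinity> then (SUP r\<in>{0..}. ereal (T r)) else ereal (T' (enn2real (\<tau> x))))"
    unfolding payment_at_def T'_def by (auto simp: max_absorb1 enn2real_nonneg fun_eq_iff)
  show ?thesis unfolding eq by measurable
qed

lemma cond_prob_01:
  assumes "prob_space M" "B \<in> sets M"
  shows "0 \<le> cond_prob M A B" "cond_prob M A B \<le> 1"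
proof -
  interpret prob_space M by fact
  have "measure M (A \<inter> B) \<le> measure M B" by (rule finite_measure_mono) (use assms in auto)
  then show "0 \<le> cond_prob M A B" "cond_prob M A B \<le> 1"
    unfolding cond_prob_def
  proof -
    have "0 \<le> measure M B" by simp
    then show "0 \<le> measure M (A \<inter> B) / measure M B" by simp
    show "measure M (A \<inter> B) / measure M B \<le> 1"
    proof (cases "measure M B = 0")
      case False
      then have "measure M B > 0" using \<open>0 \<le> measure M B\<close> by linarith
      then show ?thesis using \<open>measure M (A \<inter> B) \<le> measure M B\<close> by simp
    qed simp
  qed
qed

lemma pw_mono:
  assumes "prob_weight w" "0 \<le> a" "a \<le> b" "b \<le> 1" shows "w a \<le> w b"
proof -
  have "strict_mono_on {0..1} w" using assms(1) unfolding prob_weight_def by blast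
  then show ?thesis by (rule strict_mono_on_leD) (use assms in auto)
qed

lemma int_cmp:
  fixes a b :: "real \<Rightarrow> real"
  assumes "prob_weight w" "\<And>y. 0 \<le> y \<Longrightarrow> 0 \<le> a y \<and> a y \<le> b y \<and> b y \<le> 1"
  shows "ennreal lam * (\<integral>\<^sup>+ y\<in>{0..}. ennreal (w (a y)) \<partial>lborel)
       \<le> ennreal lam * (\<integral>\<^sup>+ y\<in>{0..}. ennreal (w (b y)) \<partial>lborel)"
proof (rule mult_left_mono)
  show "(\<integral>\<^sup>+ y\<in>{0..}. ennreal (w (a y)) \<partial>lborel) \<le> (\<integral>\<^sup>+ y\<in>{0..}. ennreal (w (b y)) \<partial>lborel)"
  proof (rule nn_integral_mono)
    fix y :: real
    show "ennreal (w (a y)) * indicator {0..} y \<le> ennreal (w (b y)) * indicator {0..} y"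
    proof (cases "0 \<le> y")
      case True
      then have "w (a y) \<le> w (b y)" using pw_mono[OF assms(1)] assms(2)[OF True] by blast
      then show ?thesis using True by (auto intro: ennreal_leI)
    qed auto
  qed
qed simp

lemma meas_full:
  assumes "prob_space M" "A \<in> sets M" "measure M A = 1" "B \<in> sets M"
  shows "measure M (A \<inter> B) = measure M B"
proof -
  interpret prob_space M by fact
  have "measure M (B - A) \<le> measure M (space M - A)"
    by (rule finite_measure_mono) (use assms sets.sets_into_space in auto)
  also have "\<dots> = 0" using prob_compl[OF assms(2)] assms(3) by simp
  finally have "measure M (B - A) = 0" using measure_nonneg[of M "B - A"] by linarith
  moreover have "measure M B = measure M (A \<inter> B) + measure M (B - A)"
  proof -
    have "A \<inter> B \<union> (B - A) = B" by blast
    then show ?thesis using finite_measure_Union[of "A \<inter> B" "B - A"] assms by auto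
  qed
  ultimately show ?thesis by simp
qed


theorem lemma3:
  fixes M :: "'a measure" and \<tau> :: "'a \<Rightarrow> ennreal" and T :: "real \<Rightarrow> real"
    and \<theta> lam :: real and wp wm :: "real \<Rightarrow> real"
  assumes "prob_space M" and "\<theta> > 0" and "lam > 0"
    and "prob_weight wp" and "prob_weight wm"
    and "pricing_stopping_time M \<tau>" and "cumulative_payment T"
    and "measure M {x\<in>space M. \<tau> x < \<infinity>} = 1"
  shows "DIR_compatible M \<theta> lam wp wm \<tau> T \<longleftrightarrow>
    (\<forall>s\<ge>0. measure M {x\<in>space M. payment_at T (\<tau> x) > ereal s} > 0 \<longrightarrow>
       ennreal lam * (\<integral>\<^sup>+ y\<in>{0..}. ennreal (wm (cond_prob M
             {x\<in>space M. payment_at T (\<tau> x) - ereal s > ereal y}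
             {x\<in>space M. payment_at T (\<tau> x) > ereal s})) \<partial>lborel)
       \<le> ennreal \<theta>)"
proof -
  interpret P: prob_space M by fact
  note cp = assms(7)
  have tm[measurable]: "\<tau> \<in> borel_measurable M"
    using assms(6) unfolding pricing_stopping_time_def by blast
  have Xm[measurable]: "(\<lambda>x. payment_at T (\<tau> x)) \<in> borel_measurable M"
    by (rule pay_meas[OF cp tm])
  have Bm: "\<And>s. {x\<in>space M. ennreal s < \<tau> x} \<in> sets M" by measurable
  have Fm: "{x\<in>space M. \<tau> x < \<infinity>} \<in> sets M" by measurable
  have Am: "\<And>c y. {x\<in>space M. payment_at T (\<tau> x) - ereal c > ereal y} \<in> sets M" by measurable
  have Cm: "\<And>c. {x\<in>space M. payment_at T (\<tau> x) > ereal c} \<in> sets M" by measurable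
  have wp1: "wp 1 = 1" using assms(4) unfolding prob_weight_def by blast
  have wm0: "wm 0 = 0" using assms(5) unfolding prob_weight_def by blast
  have rhs: "ennreal (\<theta> * wp (cond_prob M {x\<in>space M. \<tau> x < \<infinity>} {x\<in>space M. \<tau> x > ennreal s})) = ennreal \<theta>"
    if "measure M {x\<in>space M. \<tau> x > ennreal s} > 0" for s
  proof -
    have "measure M ({x\<in>space M. \<tau> x < \<infinity>} \<inter> {x\<in>space M. \<tau> x > ennreal s}) = measure M {x\<in>space M. \<tau> x > ennreal s}"
      by (rule meas_full[OF assms(1) Fm assms(8) Bm])
    then have "cond_prob M {x\<in>space M. \<tau> x < \<infinity>} {x\<in>space M. \<tau> x > ennreal s} = 1"
      unfolding cond_prob_def using that by simp
    then show ?thesis using wp1 by simp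
  qed
  have DIR_iff: "DIR_compatible M \<theta> lam wp wm \<tau> T \<longleftrightarrow>
     (\<forall>s\<ge>0. measure M {x\<in>space M. \<tau> x > ennreal s} > 0 \<longrightarrow>
        ennreal lam * (\<integral>\<^sup>+ y\<in>{0..}. ennreal (wm (cond_prob M
              {x\<in>space M. payment_at T (\<tau> x) - ereal (T s) > ereal y}
              {x\<in>space M. \<tau> x > ennreal s})) \<partial>lborel) \<le> ennreal \<theta>)"
    unfolding DIR_compatible_def using rhs by auto
  have F1: "payment_at T (\<tau> x) \<le> ereal (T s)"
    if "0 \<le> s" "\<not> ennreal s < \<tau> x" for s x
  proof -
    have le: "\<tau> x \<le> ennreal s" using that by simp
    then have "\<tau> x \<noteq> \<infinity>" by (auto simp: top_unique)
    then have "payment_at T (\<tau> x) = ereal (T (enn2real (\<tau> x)))" unfolding payment_at_def by simp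
    moreover have "enn2real (\<tau> x) \<le> s" by (rule enn2real_leI[OF that(1) le])
    ultimately show ?thesis using cp_mono[OF cp enn2real_nonneg] by simp
  qed
  show ?thesis
  proof
    assume H: "\<forall>s\<ge>0. measure M {x\<in>space M. payment_at T (\<tau> x) > ereal s} > 0 \<longrightarrow>
       ennreal lam * (\<integral>\<^sup>+ y\<in>{0..}. ennreal (wm (cond_prob M
             {x\<in>space M. payment_at T (\<tau> x) - ereal s > ereal y}
             {x\<in>space M. payment_at T (\<tau> x) > ereal s})) \<partial>lborel)
       \<le> ennreal \<theta>"
    show "DIR_compatible M \<theta> lam wp wm \<tau> T"
      unfolding DIR_iff
    proof (intro allI impI)
      fix s :: real assume s0: "0 \<le> s" and mB: "measure M {x\<in>space M. \<tau> x > ennreal s} > 0"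
      define c where "c = T s"
      have c0: "0 \<le> c" unfolding c_def by (rule cp_nonneg[OF cp s0])
      define A where "A = (\<lambda>y. {x\<in>space M. payment_at T (\<tau> x) - ereal c > ereal y})"
      define B where "B = {x\<in>space M. \<tau> x > ennreal s}"
      define C where "C = {x\<in>space M. payment_at T (\<tau> x) > ereal c}"
      have AC: "A y \<subseteq> C" if "0 \<le> y" for y
      proof
        fix x assume "x \<in> A y"
        then have "x \<in> space M" "payment_at T (\<tau> x) - ereal c > ereal y" unfolding A_def by auto
        then show "x \<in> C" unfolding C_def using that
          by (cases "payment_at T (\<tau> x)") auto
      qed
      have CB: "C \<subseteq> B"
        unfolding C_def B_def using F1[OF s0] c_def by (auto simp: not_le[symmetric])
      have Bs: "B \<in> sets M" unfolding B_def by (rule Bm)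
      have Cs: "C \<in> sets M" unfolding C_def by (rule Cm)
      have As: "A y \<in> sets M" for y unfolding A_def by (rule Am)
      have cmp: "cond_prob M (A y) B \<le> cond_prob M (A y) C" if "0 \<le> y" for y
      proof -
        have e1: "A y \<inter> B = A y" "A y \<inter> C = A y" using AC[OF that] CB by auto
        have mAC: "measure M (A y) \<le> measure M C" by (rule P.finite_measure_mono[OF AC[OF that] Cs])
        have mCB: "measure M C \<le> measure M B" by (rule P.finite_measure_mono[OF CB Bs])
        show ?thesis
        proof (cases "measure M C = 0")
          case True
          then have "measure M (A y) = 0" using mAC measure_nonneg[of M "A y"] by linarith
          then show ?thesis unfolding cond_prob_def e1 by simp
        next
          case False
          then have "measure M C > 0" using measure_nonneg[of M C] by linarith
          then show ?thesis unfolding cond_prob_def e1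
            using mCB measure_nonneg[of M "A y"] by (intro divide_left_mono) auto
        qed
      qed
      have step1: "ennreal lam * (\<integral>\<^sup>+ y\<in>{0..}. ennreal (wm (cond_prob M (A y) B)) \<partial>lborel)
          \<le> ennreal lam * (\<integral>\<^sup>+ y\<in>{0..}. ennreal (wm (cond_prob M (A y) C)) \<partial>lborel)"
        by (rule int_cmp[OF assms(5)]) (use cmp cond_prob_01[OF assms(1) Bs] cond_prob_01[OF assms(1) Cs] in auto)
      have step2: "ennreal lam * (\<integral>\<^sup>+ y\<in>{0..}. ennreal (wm (cond_prob M (A y) C)) \<partial>lborel) \<le> ennreal \<theta>"
      proof (cases "measure M C > 0")
        case True
        then show ?thesis using H c0 unfolding A_def C_def by blast
      next
        case False
        then have "measure M C = 0" using measure_nonneg[of M C] by linarith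
        then have "cond_prob M (A y) C = 0" for y unfolding cond_prob_def by simp
        then show ?thesis using wm0 by simp
      qed
      show "ennreal lam * (\<integral>\<^sup>+ y\<in>{0..}. ennreal (wm (cond_prob M
              {x\<in>space M. payment_at T (\<tau> x) - ereal (T s) > ereal y}
              {x\<in>space M. \<tau> x > ennreal s})) \<partial>lborel) \<le> ennreal \<theta>"
        using order_trans[OF step1 step2] unfolding A_def B_def c_def .
    qed
  next
    assume D: "DIR_compatible M \<theta> lam wp wm \<tau> T"
    show "\<forall>s\<ge>0. measure M {x\<in>space M. payment_at T (\<tau> x) > ereal s} > 0 \<longrightarrow>
       ennreal lam * (\<integral>\<^sup>+ y\<in>{0..}. ennreal (wm (cond_prob M
             {x\<in>space M. payment_at T (\<tau> x) - ereal s > ereal y}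
             {x\<in>space M. payment_at T (\<tau> x) > ereal s})) \<partial>lborel)
       \<le> ennreal \<theta>"
    proof (intro allI impI)
      fix s' :: real assume s0: "0 \<le> s'" and mC: "measure M {x\<in>space M. payment_at T (\<tau> x) > ereal s'} > 0"
      define C where "C = {x\<in>space M. payment_at T (\<tau> x) > ereal s'}"
      have Cs: "C \<in> sets M" unfolding C_def by (rule Cm)
      have "\<exists>u0. 0 \<le> u0 \<and> T u0 > s'"
      proof (rule ccontr)
        assume nex: "\<not> (\<exists>u0. 0 \<le> u0 \<and> T u0 > s')"
        have allle: "T u \<le> s'" if "0 \<le> u" for u using nex that by (meson not_le)
        have "C \<subseteq> space M - {x\<in>space M. \<tau> x < \<infinity>}"
        proof
          fix x assume x: "x \<in> C"
          show "x \<in> space M - {x\<in>space M. \<tau> x < \<infinity>}"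
          proof (cases "\<tau> x = \<infinity>")
            case False
            then have "payment_at T (\<tau> x) = ereal (T (enn2real (\<tau> x)))" unfolding payment_at_def by simp
            then have "payment_at T (\<tau> x) \<le> ereal s'" using allle[OF enn2real_nonneg] by simp
            then show ?thesis using x unfolding C_def by auto
          qed (use x C_def in auto)
        qed
        then have "measure M C \<le> measure M (space M - {x\<in>space M. \<tau> x < \<infinity>})"
          by (rule P.finite_measure_mono) (use Fm in auto)
        also have "\<dots> = 0" using P.prob_compl[OF Fm] assms(8) by simp
        finally show False using mC C_def by simp
      qed
      then obtain u0 where u0: "0 \<le> u0" "T u0 > s'" by blast
      define S where "S = {u. 0 \<le> u \<and> T u \<le> s'}"
      have S0: "0 \<in> S" unfolding S_def using cp_T0[OF cp] s0 by simp
      have Sb: "u \<le> u0" if "u \<in> S" for u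
      proof (rule ccontr)
        assume "\<not> u \<le> u0"
        then have "T u0 \<le> T u" using cp_mono[OF cp u0(1)] by simp
        then show False using that u0 unfolding S_def by simp
      qed
      have bdd: "bdd_above S" by (rule bdd_aboveI[of S u0]) (rule Sb)
      define t where "t = Sup S"
      have t0: "0 \<le> t" unfolding t_def using cSup_upper[OF S0 bdd] .
      have gt: "T u > s'" if "t < u" for u
      proof -
        have "u \<notin> S" using cSup_upper[OF _ bdd, of u] that t_def by auto
        then show ?thesis using that t0 unfolding S_def by auto
      qed
      have Tt: "T t \<le> s'"
      proof (cases "t = 0")
        case True
        then show ?thesis using cp_T0[OF cp] s0 by simp
      next
        case False
        then have tp: "0 < t" using t0 by simp
        show ?thesis
        proof (rule cp_leftcont[OF cp tp])
          fix u assume u: "0 \<le> u" "u < t"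
          then obtain v where v: "v \<in> S" "u < v"
            using less_cSup_iff[of S u] S0 bdd t_def by auto
          then show "T u \<le> s'" using cp_mono[OF cp u(1), of v] unfolding S_def by auto
        qed
      qed
      define B where "B = {x\<in>space M. \<tau> x > ennreal t}"
      have Bs: "B \<in> sets M" unfolding B_def by (rule Bm)
      have CB: "C = B"
      proof -
        have "ereal s' < payment_at T (\<tau> x) \<longleftrightarrow> ennreal t < \<tau> x" for x
        proof (cases "\<tau> x = \<infinity>")
          case True
          have "ereal (T (t+1)) \<le> (SUP r\<in>{0..}. ereal (T r))"
            by (rule SUP_upper) (use t0 in simp)
          moreover have "ereal s' < ereal (T (t+1))" using gt by simp
          ultimately have "ereal s' < (SUP r\<in>{0..}. ereal (T r))" by (rule order.strict_trans2[rotated])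
          then show ?thesis using True unfolding payment_at_def by simp
        next
          case False
          define r where "r = enn2real (\<tau> x)"
          have r0: "0 \<le> r" unfolding r_def by simp
          have tx: "\<tau> x = ennreal r" unfolding r_def using False by (simp add: ennreal_enn2real_if)
          have px: "payment_at T (\<tau> x) = ereal (T r)" unfolding payment_at_def r_def using False by simp
          show ?thesis
          proof (cases "t < r")
            case True
            then show ?thesis using gt[OF True] px tx ennreal_less_iff[OF t0] by simp
          next
            case False
            then have "T r \<le> T t" using cp_mono[OF cp r0] by simp
            then show ?thesis using False px tx ennreal_less_iff[OF t0] Tt by simp
          qed
        qed
        then show ?thesis unfolding C_def B_def by auto
      qed
      have mB: "measure M {x\<in>space M. \<tau> x > ennreal t} > 0" using mC CB unfolding C_def B_def by simp
      have DIRt: "ennreal lam * (\<integral>\<^sup>+ y\<in>{0..}. ennreal (wm (cond_prob M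
              {x\<in>space M. payment_at T (\<tau> x) - ereal (T t) > ereal y}
              {x\<in>space M. \<tau> x > ennreal t})) \<partial>lborel) \<le> ennreal \<theta>"
        using D[unfolded DIR_iff] t0 mB by blast
      define A1 where "A1 = (\<lambda>y. {x\<in>space M. payment_at T (\<tau> x) - ereal s' > ereal y})"
      define A2 where "A2 = (\<lambda>y. {x\<in>space M. payment_at T (\<tau> x) - ereal (T t) > ereal y})"
      have A12: "A1 y \<subseteq> A2 y" for y
      proof
        fix x assume "x \<in> A1 y"
        then have "x \<in> space M" "payment_at T (\<tau> x) - ereal s' > ereal y" unfolding A1_def by auto
        then show "x \<in> A2 y" unfolding A2_def using Tt
          by (cases "payment_at T (\<tau> x)") auto
      qed
      have cmp: "cond_prob M (A1 y) B \<le> cond_prob M (A2 y) B" for y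
      proof -
        have "measure M (A1 y \<inter> B) \<le> measure M (A2 y \<inter> B)"
          by (rule P.finite_measure_mono) (use A12 Am Bs A2_def in auto)
        then show ?thesis unfolding cond_prob_def by (intro divide_right_mono) auto
      qed
      have "ennreal lam * (\<integral>\<^sup>+ y\<in>{0..}. ennreal (wm (cond_prob M (A1 y) B)) \<partial>lborel)
          \<le> ennreal lam * (\<integral>\<^sup>+ y\<in>{0..}. ennreal (wm (cond_prob M (A2 y) B)) \<partial>lborel)"
        by (rule int_cmp[OF assms(5)]) (use cmp cond_prob_01[OF assms(1) Bs] in auto)
      also have "\<dots> \<le> ennreal \<theta>" using DIRt unfolding A2_def B_def .
      finally show "ennreal lam * (\<integral>\<^sup>+ y\<in>{0..}. ennreal (wm (cond_prob M
             {x\<in>space M. payment_at T (\<tau> x) - ereal s' > ereal y}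
             {x\<in>space M. payment_at T (\<tau> x) > ereal s'})) \<partial>lborel)
       \<le> ennreal \<theta>" unfolding A1_def CB[unfolded C_def B_def] B_def .
    qed
  qed
qed

end
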